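(* For finite sets $A, X \subset \mathbb{R}$ define the popular sums \[ P_A(X) = \left\{ y \in X+X : \sigma_X(y) \geq \frac{|X|^2}{8\,|X+X|\,\log|A|} \right\} \] and the rich set \[ R_A(X) = \left\{ x \in X : |(X+x)\cap P_A(X)| \geq \tfrac{3}{4}|X| \right\}. \] Then: (1) For every sufficiently large finite set $A\subset\mathbb{R}$, there exists $B \subset A$ with $|B| \geq \frac12 |A|$ such that \[ E_{\frac{12}{7}}(R_A(B)) \geq \frac{E_{\frac{12}{7}}(B)}{\log|A|}. \] (2) For such $A$ and $B$, there is $\Delta \in \mathbb{R}$ such that, defining \[ P_\Delta = \{ x : \delta_{R_A(B)}(x) \in [\Delta, 2\Delta)\}, \] we have \[ \Delta^{\frac{12}{7}}|P_\Delta| \approx E_{\frac{12}{7}}(R_A(B)) \approx E_{\frac{12}{7}}(B), \] and moreover \[ \Delta^2 |P_\Delta|^2 |B|^2 \ll E_3(B)\cdot \#\{(p_1,p_2,p_3) : p_1 - p_2 = p_3,\ p_1,p_2 \in P_A(B),\ p_3 \in P_\Delta\}. \]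
   Context: For finite $X\subset\mathbb{R}$: $X+X = \{x_1+x_2: x_i\in X\}$, $\sigma_X(y) = \#\{(x_1,x_2)\in X^2 : x_1+x_2 = y\}$, $\delta_X(x) = \#\{(x_1,x_2)\in X^2: x_1 - x_2 = x\}$, and for real $k \ge 1$, $E_k(X) = \sum_x \delta_X(x)^k$. Asymptotic notation is as $|A|\to\infty$: $F \ll G$ means $F = O(G)$ with an absolute constant; $F \lesssim G$ means $F \ll G (\log|A|)^{c}$ for some absolute constant $c$; $F \approx G$ means $F \lesssim G$ and $G \lesssim F$. *)

theory Defs
  imports Complex_Main
begin

definition sumset :: "real set \<Rightarrow> real set" where
  "sumset X = {x1 + x2 | x1 x2. x1 \<in> X \<and> x2 \<in> X}"

definition diffset :: "real set \<Rightarrow> real set" where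
  "diffset X = {x1 - x2 | x1 x2. x1 \<in> X \<and> x2 \<in> X}"

definition sigma_rep :: "real set \<Rightarrow> real \<Rightarrow> nat" where
  "sigma_rep X y = card {(x1, x2) \<in> X \<times> X. x1 + x2 = y}"

definition delta_rep :: "real set \<Rightarrow> real \<Rightarrow> nat" where
  "delta_rep X x = card {(x1, x2) \<in> X \<times> X. x1 - x2 = x}"

text \<open>E_k(X) = sum over x of delta_X(x)^k; delta_X vanishes off X - X.\<close>
definition energy :: "real \<Rightarrow> real set \<Rightarrow> real" where
  "energy k X = (\<Sum>x \<in> diffset X. real (delta_rep X x) powr k)"

definition popular_sums :: "real set \<Rightarrow> real set \<Rightarrow> real set" where
  "popular_sums A X = {y \<in> sumset X.
     real (sigma_rep X y) \<ge> real (card X) ^ 2 / (8 * real (card (sumset X)) * ln (real (card A)))}"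

definition rich_set :: "real set \<Rightarrow> real set \<Rightarrow> real set" where
  "rich_set A X = {x \<in> X. real (card ((\<lambda>z. z + x) ` X \<inter> popular_sums A X)) \<ge> 3 / 4 * real (card X)}"

definition level_set :: "real set \<Rightarrow> real \<Rightarrow> real set" where
  "level_set R \<Delta> = {x. \<Delta> \<le> real (delta_rep R x) \<and> real (delta_rep R x) < 2 * \<Delta>}"

definition triple_count :: "real set \<Rightarrow> real set \<Rightarrow> nat" where
  "triple_count P Q = card {(p1, p2, p3). p1 - p2 = p3 \<and> p1 \<in> P \<and> p2 \<in> P \<and> p3 \<in> Q}"

end

theory Submission
  imports Defs "HOL-Analysis.Convex" "HOL-Library.Discrete_Functions"
begin


lemma sumset_eq: "sumset X = (\<lambda>(a,b). a+b) ` (X \<times> X)"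
  unfolding sumset_def by auto
lemma diffset_eq: "diffset X = (\<lambda>(a,b). a-b) ` (X \<times> X)"
  unfolding diffset_def by auto
lemma finite_sumset: "finite X \<Longrightarrow> finite (sumset X)" by (simp add: sumset_eq)
lemma finite_diffset: "finite X \<Longrightarrow> finite (diffset X)" by (simp add: diffset_eq)

lemma sum_pairs_diff:
  fixes f :: "real \<Rightarrow> real"
  assumes "finite X"
  shows "(\<Sum>p\<in>X\<times>X. f (fst p - snd p)) = (\<Sum>d\<in>diffset X. real (delta_rep X d) * f d)"
proof -
  have "(\<Sum>p\<in>X\<times>X. f (fst p - snd p)) = (\<Sum>d\<in>diffset X. \<Sum>p\<in>{p. p\<in>X\<times>X \<and> fst p - snd p = d}. f (fst p - snd p))"
    by (rule sum.group[symmetric]) (auto simp: assms finite_diffset diffset_eq)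
  also have "... = (\<Sum>d\<in>diffset X. real (delta_rep X d) * f d)"
  proof (rule sum.cong[OF refl])
    fix d assume "d \<in> diffset X"
    have "(\<Sum>p\<in>{p. p\<in>X\<times>X \<and> fst p - snd p = d}. f (fst p - snd p)) = (\<Sum>p\<in>{p. p\<in>X\<times>X \<and> fst p - snd p = d}. f d)" by (rule sum.cong) auto
    also have "... = real (card {p. p\<in>X\<times>X \<and> fst p - snd p = d}) * f d" by simp
    also have "card {p. p\<in>X\<times>X \<and> fst p - snd p = d} = delta_rep X d" unfolding delta_rep_def by (rule arg_cong[where f=card]) auto
    finally show "(\<Sum>p\<in>{p. p\<in>X\<times>X \<and> fst p - snd p = d}. f (fst p - snd p)) = real (delta_rep X d) * f d" .
  qed
  finally show ?thesis .
qed

lemma delta_set_finite: "finite X \<Longrightarrow> finite {(x1, x2) \<in> X \<times> X. x1 - x2 = d}"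
  by (rule finite_subset[of _ "X \<times> X"]) auto

lemma delta_rep_le: assumes "finite X" shows "delta_rep X d \<le> card X"
proof -
  have "{(x1, x2) \<in> X \<times> X. x1 - x2 = d} \<subseteq> (\<lambda>x2. (x2 + d, x2)) ` X"
  proof
    fix p assume "p \<in> {(x1, x2) \<in> X \<times> X. x1 - x2 = d}"
    then obtain a b where ab: "p = (a,b)" "a \<in> X" "b \<in> X" "a - b = d" by blast
    hence "p = (\<lambda>x2. (x2 + d, x2)) b" by simp
    thus "p \<in> (\<lambda>x2. (x2 + d, x2)) ` X" using ab(3) by blast
  qed
  hence "delta_rep X d \<le> card ((\<lambda>x2. (x2 + d, x2)) ` X)" unfolding delta_rep_def
    by (intro card_mono) (simp_all add: assms)
  also have "... \<le> card X" by (rule card_image_le[OF assms])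
  finally show ?thesis .
qed

lemma delta_pos_diffset: assumes "delta_rep X d > 0" shows "d \<in> diffset X"
proof -
  have "{(x1, x2) \<in> X \<times> X. x1 - x2 = d} \<noteq> {}" 
  proof
    assume "{(x1, x2) \<in> X \<times> X. x1 - x2 = d} = {}"
    hence "delta_rep X d = 0" unfolding delta_rep_def by (simp only: card.empty)
    thus False using assms by simp
  qed
  then obtain a b where "a \<in> X" "b \<in> X" "a - b = d" by blast
  thus ?thesis unfolding diffset_def by blast
qed

lemma delta_zero: "delta_rep X 0 = card X"
proof -
  have "{(x1, x2) \<in> X \<times> X. x1 - x2 = 0} = (\<lambda>x. (x,x)) ` X" by auto
  moreover have "inj_on (\<lambda>x. (x,x)) X" by (simp add: inj_on_def)
  ultimately show ?thesis unfolding delta_rep_def by (simp add: card_image)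
qed

lemma delta_pos: assumes "finite X" "d \<in> diffset X" shows "delta_rep X d > 0"
proof -
  obtain a b where "a \<in> X" "b \<in> X" "d = a - b" using assms(2) unfolding diffset_def by blast
  hence "(a,b) \<in> {(x1, x2) \<in> X \<times> X. x1 - x2 = d}" by simp
  hence "{(x1, x2) \<in> X \<times> X. x1 - x2 = d} \<noteq> {}" by blast
  thus ?thesis unfolding delta_rep_def using delta_set_finite[OF assms(1)] by (simp add: card_gt_0_iff)
qed

lemma energy_nonneg: "energy k X \<ge> 0" unfolding energy_def by (intro sum_nonneg) auto

lemma energy_mono: assumes "finite X" "Y \<subseteq> X" "k \<ge> 0" shows "energy k Y \<le> energy k X"
proof -
  have dY: "diffset Y \<subseteq> diffset X" using assms unfolding diffset_def by blast
  have "delta_rep Y d \<le> delta_rep X d" for d unfolding delta_rep_def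
  proof (rule card_mono)
    show "finite {(x1, x2) \<in> X \<times> X. x1 - x2 = d}" by (rule finite_subset[of _ "X \<times> X"]) (auto simp: assms(1))
    show "{(x1, x2) \<in> Y \<times> Y. x1 - x2 = d} \<subseteq> {(x1, x2) \<in> X \<times> X. x1 - x2 = d}" using assms(2) by auto
  qed
  hence "energy k Y \<le> (\<Sum>x \<in> diffset Y. real (delta_rep X x) powr k)" unfolding energy_def
    by (intro sum_mono powr_mono2) (auto simp: assms)
  also have "... \<le> energy k X" unfolding energy_def
    by (intro sum_mono2 dY finite_diffset assms) auto
  finally show ?thesis .
qed

lemma energy_ge1: assumes "finite X" "X \<noteq> {}" "k \<ge> 0" shows "energy k X \<ge> 1"
proof -
  have "0 \<in> diffset X" using assms unfolding diffset_def by force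
  have "1 \<le> real (delta_rep X 0) powr k" using assms by (simp add: delta_zero card_gt_0_iff Suc_le_eq ge_one_powr_ge_zero)
  also have "... \<le> energy k X" unfolding energy_def
    by (rule member_le_sum) (auto simp: \<open>0 \<in> diffset X\<close> finite_diffset assms)
  finally show ?thesis .
qed



definition Hset :: "real set \<Rightarrow> real \<times> real \<Rightarrow> real set" where
  "Hset B p = {b \<in> B. fst p - b \<in> B \<and> snd p - b \<in> B}"

definition Gset :: "real set \<Rightarrow> real \<times> real \<Rightarrow> real set" where
  "Gset B q = {p \<in> sumset B. p - fst q \<in> B \<and> p - snd q \<in> B}"

lemma card_Gset: assumes "finite B" "q \<in> B \<times> B"
  shows "card (Gset B q) = delta_rep B (fst q - snd q)"
proof -
  obtain b b' where q: "q = (b,b')" "b \<in> B" "b' \<in> B" using assms(2) by auto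
  have img: "(\<lambda>p. (p - b', p - b)) ` Gset B q = {(x1, x2) \<in> B \<times> B. x1 - x2 = b - b'}"
  proof
    show "(\<lambda>p. (p - b', p - b)) ` Gset B q \<subseteq> {(x1, x2) \<in> B \<times> B. x1 - x2 = b - b'}"
      unfolding Gset_def q by auto
  next
    show "{(x1, x2) \<in> B \<times> B. x1 - x2 = b - b'} \<subseteq> (\<lambda>p. (p - b', p - b)) ` Gset B q"
    proof
      fix z assume "z \<in> {(x1, x2) \<in> B \<times> B. x1 - x2 = b - b'}"
      then obtain x1 x2 where z: "z = (x1,x2)" "x1 \<in> B" "x2 \<in> B" "x1 - x2 = b - b'" by blast
      have "x1 + b' \<in> sumset B" unfolding sumset_def using z q by blast
      moreover have "x1 + b' - b = x2" using z(4) by linarith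
      hence "x1 + b' - b \<in> B" using z(3) by simp
      moreover have "x1 + b' - b' \<in> B" using z(2) by simp
      ultimately have "x1 + b' \<in> Gset B q" unfolding Gset_def q by simp
      moreover have "z = (\<lambda>p. (p - b', p - b)) (x1 + b')" using z by (simp add: algebra_simps)
      ultimately show "z \<in> (\<lambda>p. (p - b', p - b)) ` Gset B q" by blast
    qed
  qed
  have "inj_on (\<lambda>p. (p - b', p - b)) (Gset B q)" by (simp add: inj_on_def)
  hence "card (Gset B q) = card {(x1, x2) \<in> B \<times> B. x1 - x2 = b - b'}"
    using img card_image by fastforce
  thus ?thesis unfolding delta_rep_def q by simp
qed

lemma finite_Hset: "finite B \<Longrightarrow> finite (Hset B p)" unfolding Hset_def by simp
lemma finite_Gset: "finite B \<Longrightarrow> finite (Gset B p)" unfolding Gset_def by (simp add: finite_sumset)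

lemma sum_H_sq:
  assumes "finite B"
  shows "(\<Sum>p\<in>sumset B \<times> sumset B. real (card (Hset B p))^2) = energy 3 B"
proof -
  let ?V = "sumset B \<times> sumset B"
  have fV: "finite ?V" using assms by (simp add: finite_sumset)
  let ?S1 = "Sigma ?V (\<lambda>p. Hset B p \<times> Hset B p)"
  let ?S2 = "Sigma (B \<times> B) (\<lambda>q. Gset B q \<times> Gset B q)"
  have "(\<Sum>p\<in>?V. real (card (Hset B p))^2) = real (\<Sum>p\<in>?V. card (Hset B p \<times> Hset B p))"
    by (simp add: power2_eq_square card_cartesian_product)
  also have "(\<Sum>p\<in>?V. card (Hset B p \<times> Hset B p)) = card ?S1"
    using fV finite_Hset[OF assms] by (simp add: card_SigmaI)
  also have "?S1 = (\<lambda>(q,p). (p,q)) ` ?S2"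
  proof
    show "?S1 \<subseteq> (\<lambda>(q,p). (p,q)) ` ?S2"
    proof
      fix z assume "z \<in> ?S1"
      then obtain p1 p2 b b' where z: "z = ((p1,p2),(b,b'))" "(p1,p2) \<in> ?V" "(b,b') \<in> Hset B (p1,p2) \<times> Hset B (p1,p2)"
        by auto
      hence "((b,b'),(p1,p2)) \<in> ?S2" unfolding Hset_def Gset_def by auto
      moreover have "z = (\<lambda>(q,p). (p,q)) ((b,b'),(p1,p2))" using z(1) by simp
      ultimately show "z \<in> (\<lambda>(q,p). (p,q)) ` ?S2" by blast
    qed
  next
    show "(\<lambda>(q,p). (p,q)) ` ?S2 \<subseteq> ?S1" unfolding Hset_def Gset_def by auto
  qed
  also have "card ((\<lambda>(q,p). (p,q)) ` ?S2) = card ?S2"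
    by (rule card_image) (auto simp: inj_on_def)
  also have "card ?S2 = (\<Sum>q\<in>B \<times> B. card (Gset B q \<times> Gset B q))"
    using assms finite_Gset[OF assms] by (simp add: card_SigmaI)
  also have "real ... = (\<Sum>q\<in>B \<times> B. real (delta_rep B (fst q - snd q))^2)"
    unfolding of_nat_sum by (intro sum.cong refl) (simp add: card_Gset[OF assms] power2_eq_square card_cartesian_product)
  also have "... = (\<Sum>d\<in>diffset B. real (delta_rep B d) * real (delta_rep B d)^2)"
    by (rule sum_pairs_diff[OF assms, where f = "\<lambda>d. real (delta_rep B d)^2"])
  also have "... = energy 3 B" unfolding energy_def
    by (intro sum.cong refl) (simp add: power2_eq_square power3_eq_cube)
  finally show ?thesis .
qed



lemma triple_count_eq:
  assumes "finite P"
  shows "triple_count P Q = card {p \<in> P \<times> P. fst p - snd p \<in> Q}"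
proof -
  let ?W = "{p \<in> P \<times> P. fst p - snd p \<in> Q}"
  have "{(p1, p2, p3). p1 - p2 = p3 \<and> p1 \<in> P \<and> p2 \<in> P \<and> p3 \<in> Q} = (\<lambda>p. (fst p, snd p, fst p - snd p)) ` ?W"
    by (force simp: image_iff)
  moreover have "inj_on (\<lambda>p. (fst p, snd p, fst p - snd p)) ?W" by (auto simp: inj_on_def)
  ultimately show ?thesis unfolding triple_count_def by (simp add: card_image)
qed

lemma card_inter_half:
  assumes "finite B" "X1 \<subseteq> B" "X2 \<subseteq> B" "4 * card X1 \<ge> 3 * card B" "4 * card X2 \<ge> 3 * card B"
  shows "2 * card (X1 \<inter> X2) \<ge> card B"
proof -
  have f: "finite X1" "finite X2" using assms finite_subset by auto
  have "card X1 + card X2 = card (X1 \<union> X2) + card (X1 \<inter> X2)" by (rule card_Un_Int[OF f])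
  moreover have "card (X1 \<union> X2) \<le> card B" using assms by (intro card_mono) auto
  ultimately show ?thesis using assms(4,5) by linarith
qed

lemma key_comb:
  fixes B R P Q :: "real set" and \<Delta> :: real
  assumes fB: "finite B" and RB: "R \<subseteq> B" and PB: "P \<subseteq> sumset B" and fQ: "finite Q" and D0: "\<Delta> \<ge> 0"
    and rich: "\<And>r. r \<in> R \<Longrightarrow> 4 * card {b \<in> B. b + r \<in> P} \<ge> 3 * card B"
    and lev: "\<And>x. x \<in> Q \<Longrightarrow> real (delta_rep R x) \<ge> \<Delta>"
  shows "\<Delta>^2 * real (card Q)^2 * real (card B)^2 \<le> 4 * (energy 3 B * real (triple_count P Q))"
proof -
  have fP: "finite P" using PB finite_sumset[OF fB] finite_subset by blast
  have fR: "finite R" using RB fB finite_subset by blast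
  define W where "W = {p \<in> P \<times> P. fst p - snd p \<in> Q}"
  have fW: "finite W" unfolding W_def using fP by simp
  define k where "k p = card {b \<in> B. fst p - b \<in> R \<and> snd p - b \<in> R}" for p
  define D where "D = {p \<in> R \<times> R. fst p - snd p \<in> Q}"
  have fD: "finite D" unfolding D_def using fR by simp
  define F where "F p = {b \<in> B. fst p + b \<in> P \<and> snd p + b \<in> P}" for p
  define SW where "SW = Sigma W (\<lambda>p. {b \<in> B. fst p - b \<in> R \<and> snd p - b \<in> R})"
  define S where "S = Sigma D F"
  have cSW: "card SW = (\<Sum>p\<in>W. k p)" unfolding SW_def k_def using fW fB by (simp add: card_SigmaI)
  have cS: "card S = (\<Sum>p\<in>D. card (F p))" unfolding S_def F_def using fD fB by (simp add: card_SigmaI)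
  have "S = (\<lambda>(p,b). ((fst p - b, snd p - b), b)) ` SW"
  proof
    show "(\<lambda>(p,b). ((fst p - b, snd p - b), b)) ` SW \<subseteq> S"
      unfolding S_def SW_def D_def F_def W_def by auto
  next
    show "S \<subseteq> (\<lambda>(p,b). ((fst p - b, snd p - b), b)) ` SW"
    proof
      fix z assume "z \<in> S"
      then obtain r1 r2 b where z: "z = ((r1,r2),b)" "r1 \<in> R" "r2 \<in> R" "r1 - r2 \<in> Q" "b \<in> B"
        "r1 + b \<in> P" "r2 + b \<in> P"
        unfolding S_def D_def F_def by auto
      have "((r1 + b, r2 + b), b) \<in> SW" unfolding SW_def W_def using z by simp
      moreover have "z = (\<lambda>(p,b). ((fst p - b, snd p - b), b)) ((r1 + b, r2 + b), b)" using z by simp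
      ultimately show "z \<in> (\<lambda>(p,b). ((fst p - b, snd p - b), b)) ` SW" by blast
    qed
  qed
  moreover have "inj_on (\<lambda>(p,b). ((fst p - b, snd p - b), b)) SW"
    by (auto simp: inj_on_def)
  ultimately have "card S = card SW" by (simp add: card_image)
  hence NS: "(\<Sum>p\<in>W. k p) = (\<Sum>p\<in>D. card (F p))" using cSW cS by simp
  have Fbig: "real (card B) \<le> 2 * real (card (F p))" if "p \<in> D" for p
  proof -
    have "fst p \<in> R" "snd p \<in> R" using that unfolding D_def by auto
    hence "2 * card ({b \<in> B. b + fst p \<in> P} \<inter> {b \<in> B. b + snd p \<in> P}) \<ge> card B"
      by (intro card_inter_half fB rich) auto
    moreover have "{b \<in> B. b + fst p \<in> P} \<inter> {b \<in> B. b + snd p \<in> P} = F p"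
      unfolding F_def by (auto simp: add.commute)
    ultimately show ?thesis by simp
  qed
  have cD: "card D = (\<Sum>x\<in>Q. delta_rep R x)"
  proof -
    have "card D = (\<Sum>p\<in>D. 1::nat)" by simp
    also have "... = (\<Sum>x\<in>Q. \<Sum>p\<in>{p. p \<in> D \<and> fst p - snd p = x}. 1::nat)"
      by (rule sum.group[symmetric, OF fD fQ]) (auto simp: D_def)
    also have "... = (\<Sum>x\<in>Q. delta_rep R x)"
    proof (intro sum.cong refl)
      fix x assume "x \<in> Q"
      hence "{p. p \<in> D \<and> fst p - snd p = x} = {(x1, x2) \<in> R \<times> R. x1 - x2 = x}" unfolding D_def by auto
      thus "(\<Sum>p\<in>{p. p \<in> D \<and> fst p - snd p = x}. 1::nat) = delta_rep R x" unfolding delta_rep_def by simp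
    qed
    finally show ?thesis .
  qed
  have "\<Delta> * real (card Q) = (\<Sum>x\<in>Q. \<Delta>)" by simp
  also have "... \<le> (\<Sum>x\<in>Q. real (delta_rep R x))" by (intro sum_mono lev)
  also have "... = real (card D)" using cD by simp
  finally have DQ: "\<Delta> * real (card Q) \<le> real (card D)" .
  define N where "N = (\<Sum>p\<in>W. real (k p))"
  have "\<Delta> * real (card Q) * real (card B) \<le> real (card D) * real (card B)"
    by (intro mult_right_mono DQ) simp
  also have "... = (\<Sum>p\<in>D. real (card B))" by simp
  also have "... \<le> (\<Sum>p\<in>D. 2 * real (card (F p)))" by (intro sum_mono Fbig)
  also have "... = 2 * N" unfolding N_def using NS
    by (simp add: sum_distrib_left[symmetric]) (metis of_nat_sum)
  finally have lowN: "\<Delta> * real (card Q) * real (card B) \<le> 2 * N" .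
  have "N^2 = (\<Sum>p\<in>W. real (k p) * 1)^2" unfolding N_def by simp
  also have "... \<le> (\<Sum>p\<in>W. (real (k p))^2) * (\<Sum>p\<in>W. 1^2)" by (rule Cauchy_Schwarz_ineq_sum)
  also have "... = (\<Sum>p\<in>W. (real (k p))^2) * real (card W)" by simp
  also have "... \<le> (\<Sum>p\<in>sumset B \<times> sumset B. real (card (Hset B p))^2) * real (card W)"
  proof (intro mult_right_mono)
    have "(\<Sum>p\<in>W. (real (k p))^2) \<le> (\<Sum>p\<in>W. real (card (Hset B p))^2)"
    proof (intro sum_mono power_mono)
      fix p assume "p \<in> W"
      have "k p \<le> card (Hset B p)" unfolding k_def Hset_def
        by (intro card_mono) (use fB RB in auto)
      thus "real (k p) \<le> real (card (Hset B p))" by simp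
    qed simp
    also have "... \<le> (\<Sum>p\<in>sumset B \<times> sumset B. real (card (Hset B p))^2)"
      by (intro sum_mono2) (use fB PB in \<open>auto simp: finite_sumset W_def\<close>)
    finally show "(\<Sum>p\<in>W. (real (k p))^2) \<le> (\<Sum>p\<in>sumset B \<times> sumset B. real (card (Hset B p))^2)" .
  qed simp
  also have "... = energy 3 B * real (triple_count P Q)"
    using sum_H_sq[OF fB] triple_count_eq[OF fP] W_def by simp
  finally have upN: "N^2 \<le> energy 3 B * real (triple_count P Q)" .
  have "0 \<le> \<Delta> * real (card Q) * real (card B)" using D0 by simp
  hence "(\<Delta> * real (card Q) * real (card B))^2 \<le> (2 * N)^2" by (intro power_mono lowN)
  thus ?thesis using upN by (simp add: power_mult_distrib)
qed



lemma rich_subset: "rich_set A X \<subseteq> X" unfolding rich_set_def by auto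

lemma rich_large:
  assumes fX: "finite X" and L0: "ln (real (card A)) > 0"
  shows "real (card (X - rich_set A X)) \<le> real (card X) / (2 * ln (real (card A)))"
proof (cases "X = {}")
  case True thus ?thesis by simp
next
  case False
  define L where "L = ln (real (card A))"
  define M where "M = card X"
  define P where "P = popular_sums A X"
  define SX where "SX = sumset X"
  have M0: "M > 0" using False fX unfolding M_def by (simp add: card_gt_0_iff)
  have fSX: "finite SX" unfolding SX_def using fX by (rule finite_sumset)
  have SXne: "SX \<noteq> {}" using False unfolding SX_def sumset_def by auto
  hence SX0: "card SX > 0" using fSX by (simp add: card_gt_0_iff)
  define Bad where "Bad = {p \<in> X \<times> X. fst p + snd p \<notin> P}"
  have fBad: "finite Bad" unfolding Bad_def using fX by simp
  have cBad: "card Bad = (\<Sum>y\<in>SX - P. sigma_rep X y)"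
  proof -
    have "card Bad = (\<Sum>p\<in>Bad. 1::nat)" by simp
    also have "... = (\<Sum>y\<in>SX - P. \<Sum>p\<in>{p. p \<in> Bad \<and> fst p + snd p = y}. 1::nat)"
      by (rule sum.group[symmetric, OF fBad]) (use fSX in \<open>auto simp: Bad_def SX_def sumset_eq\<close>)
    also have "... = (\<Sum>y\<in>SX - P. sigma_rep X y)"
    proof (intro sum.cong refl)
      fix y assume "y \<in> SX - P"
      hence "{p. p \<in> Bad \<and> fst p + snd p = y} = {(x1, x2) \<in> X \<times> X. x1 + x2 = y}" unfolding Bad_def by auto
      thus "(\<Sum>p\<in>{p. p \<in> Bad \<and> fst p + snd p = y}. 1::nat) = sigma_rep X y" unfolding sigma_rep_def by simp
    qed
    finally show ?thesis .
  qed
  have "real (card Bad) = (\<Sum>y\<in>SX - P. real (sigma_rep X y))" using cBad by simp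
  also have "... \<le> (\<Sum>y\<in>SX - P. real M ^ 2 / (8 * real (card SX) * L))"
  proof (rule sum_mono)
    fix y assume "y \<in> SX - P"
    thus "real (sigma_rep X y) \<le> real M ^ 2 / (8 * real (card SX) * L)"
      unfolding P_def popular_sums_def SX_def M_def L_def by auto
  qed
  also have "... = real (card (SX - P)) * (real M ^ 2 / (8 * real (card SX) * L))" by simp
  also have "... \<le> real (card SX) * (real M ^ 2 / (8 * real (card SX) * L))"
    using L0 unfolding L_def by (intro mult_right_mono) (auto intro: card_mono fSX)
  also have "... = real M ^ 2 / (8 * L)" using SX0 by (simp add: field_simps)
  finally have badle: "real (card Bad) \<le> real M ^ 2 / (8 * L)" .
  define NR where "NR = X - rich_set A X"
  have fNR: "finite NR" unfolding NR_def using fX by simp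
  have nrbig: "real M / 4 \<le> real (card {z \<in> X. x + z \<notin> P})" if "x \<in> NR" for x
  proof -
    have "(\<lambda>z. z + x) ` X \<inter> P = (\<lambda>z. z + x) ` {z \<in> X. z + x \<in> P}" by auto
    moreover have "inj_on (\<lambda>z. z + x) {z \<in> X. z + x \<in> P}" by (simp add: inj_on_def)
    ultimately have c1: "card ((\<lambda>z. z + x) ` X \<inter> P) = card {z \<in> X. z + x \<in> P}" by (simp add: card_image)
    have "real (card {z \<in> X. z + x \<in> P}) < 3 / 4 * real M"
      using that c1 unfolding NR_def rich_set_def P_def M_def by auto
    moreover have "card {z \<in> X. z + x \<in> P} + card {z \<in> X. x + z \<notin> P} = M"
    proof -
      have "{z \<in> X. z + x \<in> P} \<union> {z \<in> X. x + z \<notin> P} = X" by (auto simp: add.commute)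
      moreover have "{z \<in> X. z + x \<in> P} \<inter> {z \<in> X. x + z \<notin> P} = {}" by (auto simp: add.commute)
      ultimately show ?thesis unfolding M_def using fX card_Un_disjoint[of "{z \<in> X. z + x \<in> P}" "{z \<in> X. x + z \<notin> P}"]
        by simp
    qed
    ultimately show ?thesis by linarith
  qed
  have "real (card NR) * (real M / 4) = (\<Sum>x\<in>NR. real M / 4)" by simp
  also have "... \<le> (\<Sum>x\<in>NR. real (card {z \<in> X. x + z \<notin> P}))" by (intro sum_mono nrbig)
  also have "... = real (card (Sigma NR (\<lambda>x. {z \<in> X. x + z \<notin> P})))"
    using fNR fX by (simp add: card_SigmaI)
  also have "... \<le> real (card Bad)"
    using fBad unfolding Bad_def NR_def by (intro of_nat_mono card_mono) auto
  finally have "real (card NR) * (real M / 4) \<le> real M ^ 2 / (8 * L)" using badle by linarith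
  hence "real (card NR) * real M * (2 * L) \<le> real M * real M"
    using L0 unfolding L_def by (simp add: field_simps power2_eq_square)
  hence "real (card NR) * (2 * L) \<le> real M" using M0 by (simp add: mult.assoc mult_le_cancel_left)
  thus ?thesis using L0 unfolding NR_def M_def L_def by (simp add: field_simps)
qed



lemma ln2_half: "ln (2::real) > 1/2"
proof -
  have "exp 1 < (4::real)" using exp_le by linarith
  hence "ln (exp 1) < ln (4::real)" by (subst ln_less_cancel_iff) auto
  hence "1 < ln (4::real)" by simp
  also have "ln (4::real) = 2 * ln 2" using ln_realpow[of 2 2] by simp
  finally show ?thesis by simp
qed

lemma level_set_sub: assumes "\<Delta> > 0" shows "level_set R \<Delta> \<subseteq> diffset R"
proof
  fix x assume "x \<in> level_set R \<Delta>"
  hence "real (delta_rep R x) > 0" using assms unfolding level_set_def by auto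
  thus "x \<in> diffset R" by (intro delta_pos_diffset) simp
qed

lemma dyadic:
  fixes R :: "real set" and n :: nat and L :: real
  assumes fR: "finite R" and cR: "card R \<le> n" and L: "L = ln (real n)" and L1: "L \<ge> 1"
  shows "\<exists>\<Delta>::real. \<Delta> > 0 \<and>
     \<Delta> powr (12/7) * real (card (level_set R \<Delta>)) \<le> energy (12/7) R \<and>
     energy (12/7) R \<le> 12 * L * (\<Delta> powr (12/7) * real (card (level_set R \<Delta>)))"
proof -
  define k :: real where "k = 12/7"
  define K where "K = nat \<lceil>2 * L\<rceil>"
  have n0: "n > 0" using L L1 by (cases n) auto
  have KL: "real K \<ge> 2 * L" "real K \<le> 2 * L + 1" unfolding K_def using L1 by linarith+
  have "real n = exp L" using L n0 by simp
  also have "... < exp (real K * ln 2)"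
  proof -
    have "L * 1 < L * (2 * ln 2)" using ln2_half L1 by (intro mult_strict_left_mono) auto
    hence "L < 2 * L * ln 2" by simp
    also have "... \<le> real K * ln 2" using KL by (intro mult_right_mono) auto
    finally show ?thesis by simp
  qed
  also have "... = 2 ^ K" by (simp add: exp_of_nat_mult)
  finally have nK: "real n < 2 ^ K" .
  define f where "f j = ((2::real)^j) powr k * real (card (level_set R (2^j)))" for j :: nat
  define jx where "jx x = floor_log (delta_rep R x)" for x
  have jx_prop: "(2::real)^(jx x) \<le> real (delta_rep R x) \<and> real (delta_rep R x) < 2 * 2^(jx x)"
    if "x \<in> diffset R" for x
  proof -
    have "delta_rep R x > 0" by (rule delta_pos[OF fR that])
    hence "2 ^ jx x \<le> delta_rep R x" unfolding jx_def by (rule floor_log_exp2_le)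
    hence "real (2 ^ jx x) \<le> real (delta_rep R x)" by (simp only: of_nat_le_iff)
    hence a: "(2::real)^(jx x) \<le> real (delta_rep R x)" by simp
    have "delta_rep R x < 2 * 2 ^ jx x" unfolding jx_def by (rule floor_log_exp2_gt)
    hence "real (delta_rep R x) < real (2 * 2 ^ (jx x))" by (simp only: of_nat_less_iff)
    hence b: "real (delta_rep R x) < 2 * 2 ^ (jx x)" by simp
    show ?thesis using a b by simp
  qed
  have jxK: "jx x < K" if "x \<in> diffset R" for x
  proof -
    have "(2::real)^(jx x) \<le> real (delta_rep R x)" using jx_prop[OF that] by simp
    also have "... \<le> real n" using delta_rep_le[OF fR, of x] cR by simp
    also have "... < 2 ^ K" by (rule nK)
    finally show ?thesis by simp
  qed
  have fin_lev: "finite (level_set R \<Delta>)" if "\<Delta> > 0" for \<Delta>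
    using level_set_sub[OF that] finite_diffset[OF fR] finite_subset by blast
  have k2: "(2::real) powr k \<le> 4"
  proof -
    have "(2::real) powr k \<le> 2 powr 2" unfolding k_def by (intro powr_mono) auto
    thus ?thesis by simp
  qed
  have "energy k R = (\<Sum>j\<in>{..<K}. \<Sum>x\<in>{x. x \<in> diffset R \<and> jx x = j}. real (delta_rep R x) powr k)"
    unfolding energy_def
    by (rule sum.group[symmetric]) (use finite_diffset[OF fR] jxK in auto)
  also have "... \<le> (\<Sum>j\<in>{..<K}. 4 * f j)"
  proof (rule sum_mono)
    fix j assume "j \<in> {..<K}"
    let ?F = "{x. x \<in> diffset R \<and> jx x = j}"
    have FL: "?F \<subseteq> level_set R (2^j)" unfolding level_set_def using jx_prop by auto
    have "(\<Sum>x\<in>?F. real (delta_rep R x) powr k) \<le> (\<Sum>x\<in>?F. (2 * 2^j) powr k)"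
    proof (rule sum_mono)
      fix x assume "x \<in> ?F"
      hence "real (delta_rep R x) < 2 * 2^j" "real (delta_rep R x) > 0"
        using jx_prop[of x] delta_pos[OF fR, of x] by auto
      thus "real (delta_rep R x) powr k \<le> (2 * 2^j) powr k" unfolding k_def by (intro powr_mono2) auto
    qed
    also have "... = real (card ?F) * (2 powr k * (2^j) powr k)" by (simp add: powr_mult)
    also have "... \<le> real (card (level_set R (2^j))) * (4 * (2^j) powr k)"
      using FL fin_lev[of "2^j"] k2 by (intro mult_mono card_mono of_nat_mono) auto
    also have "... = 4 * f j" unfolding f_def by simp
    finally show "(\<Sum>x\<in>?F. real (delta_rep R x) powr k) \<le> 4 * f j" .
  qed
  finally have E1: "energy k R \<le> (\<Sum>j\<in>{..<K}. 4 * f j)" .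
  have K0: "K > 0" using KL L1 by linarith
  obtain j0 where j0: "j0 \<in> {..<K}" "f j0 = Max (f ` {..<K})"
    using Max_in[of "f ` {..<K}"] K0 by fastforce
  have fmax: "f j \<le> f j0" if "j \<in> {..<K}" for j using j0(2) that by simp
  have "energy k R \<le> (\<Sum>j\<in>{..<K}. 4 * f j0)" by (intro order_trans[OF E1] sum_mono mult_left_mono fmax) auto
  also have "... = real K * 4 * f j0" by simp
  also have "... \<le> 12 * L * f j0"
  proof (rule mult_right_mono)
    show "real K * 4 \<le> 12 * L" using KL L1 by linarith
    show "0 \<le> f j0" unfolding f_def by simp
  qed
  finally have up: "energy k R \<le> 12 * L * f j0" .
  have "f j0 = (\<Sum>x\<in>level_set R (2^j0). ((2::real)^j0) powr k)" unfolding f_def by simp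
  also have "... \<le> (\<Sum>x\<in>level_set R (2^j0). real (delta_rep R x) powr k)"
    unfolding level_set_def k_def by (intro sum_mono powr_mono2) auto
  also have "... \<le> energy k R" unfolding energy_def
    by (intro sum_mono2 finite_diffset fR level_set_sub) auto
  finally have low: "f j0 \<le> energy k R" .
  show ?thesis using up low unfolding f_def k_def by (intro exI[of _ "2^j0"]) auto
qed



lemma energy_upper:
  assumes fX: "finite X" and k: "0 \<le> k" "k \<le> 2"
  shows "energy k X \<le> real (card X) ^ 4"
proof -
  have "energy k X \<le> (\<Sum>d\<in>diffset X. real (card X) ^ 2)" unfolding energy_def
  proof (rule sum_mono)
    fix d assume d: "d \<in> diffset X"
    have pos: "delta_rep X d > 0" by (rule delta_pos[OF fX d])
    have le: "delta_rep X d \<le> card X" by (rule delta_rep_le[OF fX])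
    have "real (delta_rep X d) powr k \<le> real (card X) powr k"
      using pos le k by (intro powr_mono2) auto
    also have "... \<le> real (card X) powr 2"
      using pos le k by (intro powr_mono) auto
    also have "... = real (card X) ^ 2" by simp
    finally show "real (delta_rep X d) powr k \<le> real (card X) ^ 2" .
  qed
  also have "... = real (card (diffset X)) * real (card X) ^ 2" by simp
  also have "... \<le> real (card X) ^ 2 * real (card X) ^ 2"
  proof (intro mult_right_mono)
    have "card (diffset X) \<le> card (X \<times> X)" unfolding diffset_eq using fX by (intro card_image_le) simp
    hence "real (card (diffset X)) \<le> real (card X * card X)" by (simp only: of_nat_le_iff card_cartesian_product)
    thus "real (card (diffset X)) \<le> real (card X) ^ 2" by (simp add: power2_eq_square)
  qed simp
  also have "... = real (card X) ^ 4" by (simp add: power_add[symmetric])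
  finally show ?thesis .
qed

lemma part1:
  assumes fA: "finite A" and big: "ln (real (card A)) \<ge> exp 8"
  shows "\<exists>B. B \<subseteq> A \<and> 2 * card B \<ge> card A \<and>
          energy (12/7) (rich_set A B) \<ge> energy (12/7) B / ln (real (card A))"
proof (rule ccontr)
  assume neg: "\<not> ?thesis"
  define n where "n = card A"
  define L where "L = ln (real n)"
  have L8: "L \<ge> exp 8" using big unfolding L_def n_def by simp
  have "exp 8 > (0::real)" by simp
  hence L0: "L > 0" using L8 by linarith
  have n0: "n > 0" using L0 unfolding L_def by (cases n) auto
  define Bs where "Bs i = (rich_set A ^^ i) A" for i
  have BsS: "Bs (Suc i) = rich_set A (Bs i)" for i unfolding Bs_def by simp
  have BsA: "Bs i \<subseteq> A" for i
  proof (induction i)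
    case 0 thus ?case unfolding Bs_def by simp
  next
    case (Suc i) thus ?case using rich_subset[of A "Bs i"] BsS by blast
  qed
  have fBs: "finite (Bs i)" for i using BsA fA finite_subset by blast
  have cardBs: "real (card (Bs i)) \<ge> real n - real i * real n / (2 * L)" for i
  proof (induction i)
    case 0 thus ?case unfolding Bs_def n_def by simp
  next
    case (Suc i)
    have sub: "rich_set A (Bs i) \<subseteq> Bs i" by (rule rich_subset)
    have "card (Bs i - rich_set A (Bs i)) = card (Bs i) - card (rich_set A (Bs i))"
      by (rule card_Diff_subset[OF finite_subset[OF sub fBs[of i]] sub])
    moreover have "card (rich_set A (Bs i)) \<le> card (Bs i)" using sub fBs by (intro card_mono) auto
    ultimately have e: "real (card (Bs (Suc i))) = real (card (Bs i)) - real (card (Bs i - rich_set A (Bs i)))"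
      using BsS by simp
    have "real (card (Bs i - rich_set A (Bs i))) \<le> real (card (Bs i)) / (2 * L)"
      using rich_large[OF fBs, of A] L0 unfolding L_def n_def by simp
    also have "... \<le> real n / (2 * L)"
      using L0 card_mono[OF fA BsA[of i]] unfolding n_def by (intro divide_right_mono) auto
    finally have "real (card (Bs i - rich_set A (Bs i))) \<le> real n / (2 * L)" .
    hence "real (card (Bs (Suc i))) \<ge> real (card (Bs i)) - real n / (2 * L)" using e by linarith
    moreover have "real n - real (Suc i) * real n / (2 * L) = (real n - real i * real n / (2 * L)) - real n / (2 * L)"
      using L0 by (simp add: field_simps)
    ultimately show ?case using Suc.IH by linarith
  qed
  define m where "m = nat \<lfloor>L\<rfloor>"
  have mL: "real m \<le> L" "real m > L - 1" unfolding m_def using L0 by linarith+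
  have half: "2 * card (Bs i) \<ge> n" if "i \<le> m" for i
  proof -
    have "real i * real n / (2 * L) \<le> L * real n / (2 * L)"
      using that mL L0 by (intro divide_right_mono mult_right_mono) auto
    also have "... = real n / 2" using L0 by simp
    finally have "real (card (Bs i)) \<ge> real n / 2" using cardBs[of i] by linarith
    thus ?thesis by linarith
  qed
  have step: "energy (12/7) (Bs (Suc i)) < energy (12/7) (Bs i) / L" if "i < m" for i
    using neg BsA[of i] half[of i] that BsS unfolding L_def n_def by fastforce
  have decay: "energy (12/7) (Bs i) \<le> energy (12/7) A / L ^ i" if "i \<le> m" for i
    using that
  proof (induction i)
    case 0 thus ?case unfolding Bs_def by simp
  next
    case (Suc i)
    have "energy (12/7) (Bs (Suc i)) \<le> energy (12/7) (Bs i) / L" using step[of i] Suc.prems by simp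
    also have "... \<le> (energy (12/7) A / L ^ i) / L" using Suc L0 by (intro divide_right_mono) auto
    also have "... = energy (12/7) A / L ^ Suc i" by (simp add: field_simps)
    finally show ?case .
  qed
  have ne: "Bs m \<noteq> {}" using half[of m] n0 by auto
  have "1 \<le> energy (12/7) (Bs m)" by (rule energy_ge1[OF fBs ne]) simp
  also have "... \<le> energy (12/7) A / L ^ m" by (rule decay) simp
  also have "... \<le> real n ^ 4 / L ^ m" using L0 energy_upper[OF fA, of "12/7"] unfolding n_def
    by (intro divide_right_mono) auto
  finally have c1: "L ^ m \<le> real n ^ 4" using L0 by (simp add: field_simps)
  have "real n ^ 4 = exp L ^ 4" unfolding L_def using n0 by simp
  also have "... = exp (real 4 * L)" by (rule exp_of_nat_mult[symmetric])
  also have "... < exp (real m * 8)" using mL L8 \<open>exp 8 > 0\<close> by simp (smt (verit) exp_ge_add_one_self)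
  also have "... = exp 8 ^ m" by (rule exp_of_nat_mult)
  also have "... \<le> L ^ m" using L8 by (intro power_mono) auto
  finally show False using c1 by simp
qed


lemma rich_card: assumes "r \<in> rich_set A B"
  shows "4 * card {b \<in> B. b + r \<in> popular_sums A B} \<ge> 3 * card B"
proof -
  let ?P = "popular_sums A B"
  have "(\<lambda>z. z + r) ` B \<inter> ?P = (\<lambda>z. z + r) ` {z \<in> B. z + r \<in> ?P}" by auto
  moreover have "inj_on (\<lambda>z. z + r) {z \<in> B. z + r \<in> ?P}" by (simp add: inj_on_def)
  ultimately have c1: "card ((\<lambda>z. z + r) ` B \<inter> ?P) = card {z \<in> B. z + r \<in> ?P}" by (simp add: card_image)
  have "real (card ((\<lambda>z. z + r) ` B \<inter> ?P)) \<ge> 3 / 4 * real (card B)"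
    using assms unfolding rich_set_def by auto
  hence "real (card {z \<in> B. z + r \<in> ?P}) \<ge> 3 / 4 * real (card B)" using c1 by simp
  thus ?thesis by linarith
qed

lemma energy_empty: "energy k {} = 0" unfolding energy_def diffset_def by simp

theorem lemma1p7:
  shows "\<exists>(N::nat) (C::real) (c::real). C > 0 \<and>
    (\<forall>A :: real set. finite A \<and> card A \<ge> N \<longrightarrow>
      (\<exists>B. B \<subseteq> A \<and> 2 * card B \<ge> card A \<and>
          energy (12/7) (rich_set A B) \<ge> energy (12/7) B / ln (real (card A)))
      \<and>
      (\<forall>B. B \<subseteq> A \<and> 2 * card B \<ge> card A \<and>
          energy (12/7) (rich_set A B) \<ge> energy (12/7) B / ln (real (card A)) \<longrightarrow>
        (\<exists>\<Delta>::real.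
           let R = rich_set A B; P\<^sub>\<Delta> = level_set R \<Delta>; L = ln (real (card A)) in
             \<Delta> powr (12/7) * real (card P\<^sub>\<Delta>) \<le> C * L powr c * energy (12/7) R
           \<and> energy (12/7) R \<le> C * L powr c * (\<Delta> powr (12/7) * real (card P\<^sub>\<Delta>))
           \<and> energy (12/7) R \<le> C * L powr c * energy (12/7) B
           \<and> energy (12/7) B \<le> C * L powr c * energy (12/7) R
           \<and> \<Delta>^2 * real (card P\<^sub>\<Delta>)^2 * real (card B)^2
               \<le> C * (energy 3 B * real (triple_count (popular_sums A B) P\<^sub>\<Delta>)))))"
proof (rule exI[of _ "nat \<lceil>exp (exp (8::real))\<rceil>"], rule exI[of _ "12::real"], rule exI[of _ "1::real"], intro conjI allI impI)
  show "(0::real) < 12" by simp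
  fix A :: "real set"
  assume Aass: "finite A \<and> nat \<lceil>exp (exp (8::real))\<rceil> \<le> card A"
  hence fA: "finite A" by simp
  define L where "L = ln (real (card A))"
  have "exp (exp 8) \<le> real (card A)" using Aass by linarith
  moreover have "(0::real) < exp (exp 8)" by simp
  ultimately have "real (card A) > 0" by linarith
  hence "ln (exp (exp 8)) \<le> L" unfolding L_def using \<open>exp (exp 8) \<le> real (card A)\<close>
    by (subst ln_le_cancel_iff) auto
  hence L8: "exp 8 \<le> L" by simp
  have "(1::real) \<le> exp 8" by simp
  hence L1: "1 \<le> L" using L8 by linarith
  show "\<exists>B. B \<subseteq> A \<and> 2 * card B \<ge> card A \<and>
          energy (12/7) (rich_set A B) \<ge> energy (12/7) B / ln (real (card A))"
    by (rule part1[OF fA]) (use L8 L_def in simp)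
  fix B assume Bass: "B \<subseteq> A \<and> 2 * card B \<ge> card A \<and>
          energy (12/7) (rich_set A B) \<ge> energy (12/7) B / ln (real (card A))"
  define R where "R = rich_set A B"
  have BA: "B \<subseteq> A" using Bass by simp
  have fB: "finite B" using BA fA finite_subset by blast
  have cA: "card A > 0" using L1 unfolding L_def by (cases "card A") auto
  have Bne: "B \<noteq> {}" using Bass cA by auto
  have EB1: "energy (12/7) B \<ge> 1" by (rule energy_ge1[OF fB Bne]) simp
  have ERB: "energy (12/7) R \<ge> energy (12/7) B / L" using Bass unfolding R_def L_def by simp
  have RB: "R \<subseteq> B" unfolding R_def by (rule rich_subset)
  have fR: "finite R" using RB fB finite_subset by blast
  have cR: "card R \<le> card A" using RB BA fA by (intro card_mono) auto
  obtain \<Delta> where D: "\<Delta> > 0"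
    "\<Delta> powr (12/7) * real (card (level_set R \<Delta>)) \<le> energy (12/7) R"
    "energy (12/7) R \<le> 12 * L * (\<Delta> powr (12/7) * real (card (level_set R \<Delta>)))"
    using dyadic[OF fR cR L_def L1] by blast
  have L0: "L > 0" using L1 by simp
  have E0: "energy (12/7) R \<ge> 0" by (rule energy_nonneg)
  have i1: "\<Delta> powr (12/7) * real (card (level_set R \<Delta>)) \<le> 12 * L * energy (12/7) R"
  proof -
    have "1 * energy (12/7) R \<le> (12 * L) * energy (12/7) R" using E0 L1
      by (intro mult_right_mono) auto
    hence "energy (12/7) R \<le> 12 * L * energy (12/7) R" by simp
    thus ?thesis using D(2) by linarith
  qed
  have i3: "energy (12/7) R \<le> 12 * L * energy (12/7) B"
  proof -
    have "energy (12/7) R \<le> energy (12/7) B" using energy_mono[OF fB RB] by simp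
    moreover have "1 * energy (12/7) B \<le> (12 * L) * energy (12/7) B" using EB1 L1
      by (intro mult_right_mono) auto
    ultimately show ?thesis by linarith
  qed
  have i4: "energy (12/7) B \<le> 12 * L * energy (12/7) R"
  proof -
    have "energy (12/7) B \<le> L * energy (12/7) R" using ERB L0 by (simp add: field_simps)
    moreover have "L * energy (12/7) R \<le> (12 * L) * energy (12/7) R" using E0 L0
      by (intro mult_right_mono) auto
    ultimately show ?thesis by linarith
  qed
  have i5: "\<Delta>^2 * real (card (level_set R \<Delta>))^2 * real (card B)^2
      \<le> 12 * (energy 3 B * real (triple_count (popular_sums A B) (level_set R \<Delta>)))"
  proof -
    have PB: "popular_sums A B \<subseteq> sumset B" unfolding popular_sums_def by auto
    have fL: "finite (level_set R \<Delta>)" using level_set_sub[OF D(1)] finite_diffset[OF fR] finite_subset by blast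
    have "\<Delta>^2 * real (card (level_set R \<Delta>))^2 * real (card B)^2
      \<le> 4 * (energy 3 B * real (triple_count (popular_sums A B) (level_set R \<Delta>)))"
      by (rule key_comb[OF fB RB PB fL]) (use D(1) rich_card R_def level_set_def in auto)
    moreover have "0 \<le> energy 3 B * real (triple_count (popular_sums A B) (level_set R \<Delta>))"
      using energy_nonneg by simp
    ultimately show ?thesis by linarith
  qed
  show "\<exists>\<Delta>::real.
           let R = rich_set A B; P\<^sub>\<Delta> = level_set R \<Delta>; L = ln (real (card A)) in
             \<Delta> powr (12/7) * real (card P\<^sub>\<Delta>) \<le> 12 * L powr 1 * energy (12/7) R
           \<and> energy (12/7) R \<le> 12 * L powr 1 * (\<Delta> powr (12/7) * real (card P\<^sub>\<Delta>))
           \<and> energy (12/7) R \<le> 12 * L powr 1 * energy (12/7) B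
           \<and> energy (12/7) B \<le> 12 * L powr 1 * energy (12/7) R
           \<and> \<Delta>^2 * real (card P\<^sub>\<Delta>)^2 * real (card B)^2
               \<le> 12 * (energy 3 B * real (triple_count (popular_sums A B) P\<^sub>\<Delta>))"
    using i1 D(3) i3 i4 i5 L0 unfolding Let_def R_def[symmetric] L_def[symmetric]
    by (intro exI[of _ \<Delta>]) simp
qed

end
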